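(* Let $f:\mathbb{R}^n\times\mathbb{R}\to\mathbb{R}$ be continuously differentiable with $f(a,b)=0$ and $\partial_y f(a,b)\ne0$. If the implicit function $y=g(x)$ with $f(x,g(x))=0$ near $(a,b)$ is a polynomial, then there is a rectangle $R=\prod_{k=1}^n[\xi_k,\eta_k]\ni a$ and a compact interval $I\ni b$ such that $f$ satisfies Assumption 1 on $R\times I$ and, for any $N=(N_1,\dots,N_n)$ with $N_k$ larger than the largest exponent of $x_k$ in $g$, $$g(x)=\sum_{0\le\beta\le N-1}c_\beta(x-a)^\beta,\qquad c_\beta=\prod_{k=1}^n(\beta_k+1)\sum_{1\le\alpha\le N}\prod_{k=1}^n\big(V_{N_k}^{-1}\big)_{\beta_k+1,\alpha_k}\,d_\alpha .$$
   Context: Multi-index notation: $\alpha\le\beta$ componentwise, $(x-a)^\beta=\prod_k(x_k-a_k)^{\beta_k}$. $\operatorname{sign}_y f(x,y)=1$ if $f(x,y)\ge0$ and $-1$ otherwise; $\Theta_y f(x,y)=1$ if $f(x,y)\ge0$ and $0$ otherwise. Assumption 1 on $R\times I$: for every $x\in R$, $y\mapsto\operatorname{sign}_y f(x,y)$ has exactly one jump discontinuity on $I$. $n_y(f)\in\{1,-1\}$ is $1$ if $y\mapsto\operatorname{sign}_y f(x,y)$ is increasing on $I$ and $-1$ if decreasing (constant on $R$). $\Delta_k=(\eta_k-\xi_k)/N_k$; $R_\alpha=\prod_{k}[\xi_k+(\alpha_k-1)\Delta_k,\xi_k+\alpha_k\Delta_k]$ for $1\le\alpha\le N$; $V_{N_k}$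 is the $N_k\times N_k$ matrix with $(\alpha_k,j)$ entry $(\xi_k+\alpha_k\Delta_k-a_k)^j-(\xi_k+(\alpha_k-1)\Delta_k-a_k)^j$; $d_\alpha=\frac{1+n_y(f)}{2}|R_\alpha|\max I+\frac{1-n_y(f)}{2}|R_\alpha|\min I-n_y(f)\iint_{R_\alpha\times I}\Theta_y f\,dx\,dy$. *)

theory Defs
  imports "HOL-Analysis.Analysis"
begin

definition sign_y :: "('x \<Rightarrow> real \<Rightarrow> real) \<Rightarrow> 'x \<Rightarrow> real \<Rightarrow> real" where
  "sign_y f x y = (if f x y \<ge> 0 then 1 else -1)"

definition Theta_y :: "('x \<Rightarrow> real \<Rightarrow> real) \<Rightarrow> 'x \<Rightarrow> real \<Rightarrow> real" where
  "Theta_y f x y = (if f x y \<ge> 0 then 1 else 0)"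

definition one_jump_on :: "(real \<Rightarrow> real) \<Rightarrow> real set \<Rightarrow> bool" where
  "one_jump_on s I \<longleftrightarrow> (\<exists>!c. c \<in> I \<and> \<not> continuous (at c within I) s) \<and>
     (\<forall>c\<in>I. \<not> continuous (at c within I) s \<longrightarrow>
        c \<in> interior I \<and>
        (\<exists>L R. (s \<longlongrightarrow> L) (at_left c) \<and> (s \<longlongrightarrow> R) (at_right c) \<and> L \<noteq> R))"

definition assumption1 :: "('x \<Rightarrow> real \<Rightarrow> real) \<Rightarrow> 'x set \<Rightarrow> real set \<Rightarrow> bool" where
  "assumption1 f R I \<longleftrightarrow> (\<forall>x\<in>R. one_jump_on (sign_y f x) I)"

text \<open>n_y(f) at the point x: 1 if y \<mapsto> sign_y f x y is increasing on I, -1 otherwise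
  (under Assumption 1 it is then decreasing).\<close>
definition n_y :: "('x \<Rightarrow> real \<Rightarrow> real) \<Rightarrow> real set \<Rightarrow> 'x \<Rightarrow> real" where
  "n_y f I x = (if mono_on I (sign_y f x) then 1 else -1)"

definition inv_matN :: "nat \<Rightarrow> (nat \<Rightarrow> nat \<Rightarrow> real) \<Rightarrow> (nat \<Rightarrow> nat \<Rightarrow> real)" where
  "inv_matN m V = (THE W.
     (\<forall>i\<in>{1..m}. \<forall>j\<in>{1..m}. (\<Sum>l=1..m. W i l * V l j) = (if i = j then 1 else 0)) \<and>
     (\<forall>i\<in>{1..m}. \<forall>j\<in>{1..m}. (\<Sum>l=1..m. V i l * W l j) = (if i = j then 1 else 0)) \<and>
     (\<forall>i j. i \<notin> {1..m} \<or> j \<notin> {1..m} \<longrightarrow> W i j = 0))"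

definition poly_eval :: "(('n::finite \<Rightarrow> nat) \<Rightarrow> real) \<Rightarrow> real^'n \<Rightarrow> real" where
  "poly_eval p x = (\<Sum>\<beta>\<in>{\<beta>. p \<beta> \<noteq> 0}. p \<beta> * (\<Prod>k\<in>UNIV. (x $ k) ^ \<beta> k))"

definition deg_in :: "(('n::finite \<Rightarrow> nat) \<Rightarrow> real) \<Rightarrow> 'n \<Rightarrow> nat" where
  "deg_in p k = Max (insert 0 {\<beta> k | \<beta>. p \<beta> \<noteq> 0})"

definition Delta :: "real^'n \<Rightarrow> real^'n \<Rightarrow> ('n \<Rightarrow> nat) \<Rightarrow> 'n \<Rightarrow> real" where
  "Delta \<xi> \<eta> N k = (\<eta> $ k - \<xi> $ k) / real (N k)"

definition R_alpha :: "real^'n \<Rightarrow> real^'n \<Rightarrow> ('n \<Rightarrow> nat) \<Rightarrow> ('n \<Rightarrow> nat) \<Rightarrow> (real^'n) set" where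
  "R_alpha \<xi> \<eta> N \<alpha> = cbox (\<chi> k. \<xi> $ k + (real (\<alpha> k) - 1) * Delta \<xi> \<eta> N k)
                            (\<chi> k. \<xi> $ k + real (\<alpha> k) * Delta \<xi> \<eta> N k)"

definition V_mat :: "real^'n \<Rightarrow> real^'n \<Rightarrow> real^'n \<Rightarrow> ('n \<Rightarrow> nat) \<Rightarrow> 'n \<Rightarrow> nat \<Rightarrow> nat \<Rightarrow> real" where
  "V_mat a \<xi> \<eta> N k i j =
     (if i \<in> {1..N k} \<and> j \<in> {1..N k} then
        (\<xi> $ k + real i * Delta \<xi> \<eta> N k - a $ k) ^ j
        - (\<xi> $ k + (real i - 1) * Delta \<xi> \<eta> N k - a $ k) ^ j
      else 0)"

definition d_alpha :: "(real^'n \<Rightarrow> real \<Rightarrow> real) \<Rightarrow> real \<Rightarrow> real set \<Rightarrow> real^'n \<Rightarrow> real^'n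
     \<Rightarrow> ('n \<Rightarrow> nat) \<Rightarrow> ('n \<Rightarrow> nat) \<Rightarrow> real" where
  "d_alpha f \<nu> I \<xi> \<eta> N \<alpha> =
     (1 + \<nu>) / 2 * (\<Prod>k\<in>UNIV. Delta \<xi> \<eta> N k) * Sup I
     + (1 - \<nu>) / 2 * (\<Prod>k\<in>UNIV. Delta \<xi> \<eta> N k) * Inf I
     - \<nu> * integral (R_alpha \<xi> \<eta> N \<alpha> \<times> I) (\<lambda>z. Theta_y f (fst z) (snd z))"

definition c_beta :: "(real^'n \<Rightarrow> real \<Rightarrow> real) \<Rightarrow> real \<Rightarrow> real set \<Rightarrow> real^'n \<Rightarrow> real^'n \<Rightarrow> real^'n
     \<Rightarrow> ('n \<Rightarrow> nat) \<Rightarrow> ('n \<Rightarrow> nat) \<Rightarrow> real" where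
  "c_beta f \<nu> I a \<xi> \<eta> N \<beta> =
     (\<Prod>k\<in>UNIV. real (\<beta> k + 1)) *
     (\<Sum>\<alpha>\<in>{\<alpha>. \<forall>k. 1 \<le> \<alpha> k \<and> \<alpha> k \<le> N k}.
        (\<Prod>k\<in>UNIV. inv_matN (N k) (V_mat a \<xi> \<eta> N k) (\<beta> k + 1) (\<alpha> k)) * d_alpha f \<nu> I \<xi> \<eta> N \<alpha>)"

end

theory Submission imports Defs "Jordan_Normal_Form.Determinant" "HOL-Computational_Algebra.Polynomial" begin


lemma inv_matN_ok:
  fixes V :: "nat \<Rightarrow> nat \<Rightarrow> real"
  assumes inj: "\<And>c. (\<forall>i\<in>{1..m}. (\<Sum>j=1..m. V i j * c j) = 0) \<Longrightarrow> \<forall>j\<in>{1..m}. c j = 0"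
  shows "\<forall>i\<in>{1..m}. \<forall>j\<in>{1..m}. (\<Sum>l=1..m. inv_matN m V i l * V l j) = (if i = j then 1 else 0)"
proof -
  define A where "A = mat m m (\<lambda>(i,j). V (Suc i) (Suc j))"
  have A: "A \<in> carrier_mat m m" by (simp add: A_def)
  have "det A \<noteq> 0"
  proof
    assume "det A = 0"
    then obtain v where v: "v \<in> carrier_vec m" "v \<noteq> 0\<^sub>v m" "A *\<^sub>v v = 0\<^sub>v m"
      using det_0_iff_vec_prod_zero[OF A] by auto
    define c where "c j = (if j \<in> {1..m} then v $ (j - 1) else 0)" for j
    have "\<forall>i\<in>{1..m}. (\<Sum>j=1..m. V i j * c j) = 0"
    proof
      fix i assume i: "i \<in> {1..m}"
      then have "(A *\<^sub>v v) $ (i - 1) = 0" using v(3) by auto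
      moreover have "(A *\<^sub>v v) $ (i - 1) = (\<Sum>j<m. V i (Suc j) * v $ j)"
      proof -
        have i1: "i - 1 < m" "Suc (i - 1) = i" using i by auto
        show ?thesis using i1 v(1) by (simp add: A_def scalar_prod_def atLeast0LessThan)
      qed
      moreover have "(\<Sum>j=1..m. V i j * c j) = (\<Sum>j<m. V i (Suc j) * v $ j)"
        by (simp add: sum.atLeast1_atMost_eq c_def)
      ultimately show "(\<Sum>j=1..m. V i j * c j) = 0" by simp
    qed
    then have c0: "\<forall>j\<in>{1..m}. c j = 0" by (rule inj)
    have "v = 0\<^sub>v m"
    proof (rule eq_vecI)
      fix j assume "j < dim_vec (0\<^sub>v m)"
      then have "j < m" by simp
      then have "c (Suc j) = 0" using c0 by auto
      then show "v $ j = 0\<^sub>v m $ j" using \<open>j < m\<close> by (simp add: c_def)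
    qed (use v in auto)
    with v(2) show False by simp
  qed
  then have "A \<in> Units (ring_mat TYPE(real) m ())" by (rule det_non_zero_imp_unit[OF A])
  then obtain B where B: "B \<in> carrier_mat m m" "B * A = 1\<^sub>m m" "A * B = 1\<^sub>m m"
    by (auto simp: Units_def ring_mat_def)
  define W where "W i j = (if i \<in> {1..m} \<and> j \<in> {1..m} then B $$ (i - 1, j - 1) else 0)" for i j
  have WV: "(\<Sum>l=1..m. W i l * V l j) = (if i = j then 1 else 0)" if "i \<in> {1..m}" "j \<in> {1..m}" for i j
  proof -
    have "(B * A) $$ (i - 1, j - 1) = (if i = j then 1 else 0)" using B(2) that by auto
    moreover have "(B * A) $$ (i - 1, j - 1) = (\<Sum>l<m. B $$ (i - 1, l) * V (Suc l) j)"
    proof -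
      have i1: "i - 1 < m" "Suc (i - 1) = i" "j - 1 < m" "Suc (j - 1) = j" using that by auto
      show ?thesis using i1 B(1) by (simp add: A_def scalar_prod_def atLeast0LessThan)
    qed
    moreover have "(\<Sum>l=1..m. W i l * V l j) = (\<Sum>l<m. B $$ (i - 1, l) * V (Suc l) j)"
      using that by (simp add: sum.atLeast1_atMost_eq W_def)
    ultimately show ?thesis by simp
  qed
  have VW: "(\<Sum>l=1..m. V i l * W l j) = (if i = j then 1 else 0)" if "i \<in> {1..m}" "j \<in> {1..m}" for i j
  proof -
    have "(A * B) $$ (i - 1, j - 1) = (if i = j then 1 else 0)" using B(3) that by auto
    moreover have "(A * B) $$ (i - 1, j - 1) = (\<Sum>l<m. V i (Suc l) * B $$ (l, j - 1))"
    proof -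
      have i1: "i - 1 < m" "Suc (i - 1) = i" "j - 1 < m" "Suc (j - 1) = j" using that by auto
      show ?thesis using i1 B(1) by (simp add: A_def scalar_prod_def atLeast0LessThan)
    qed
    moreover have "(\<Sum>l=1..m. V i l * W l j) = (\<Sum>l<m. V i (Suc l) * B $$ (l, j - 1))"
      using that by (simp add: sum.atLeast1_atMost_eq W_def)
    ultimately show ?thesis by simp
  qed
  define P where "P W' \<longleftrightarrow>
     (\<forall>i\<in>{1..m}. \<forall>j\<in>{1..m}. (\<Sum>l=1..m. W' i l * V l j) = (if i = j then 1 else 0)) \<and>
     (\<forall>i\<in>{1..m}. \<forall>j\<in>{1..m}. (\<Sum>l=1..m. V i l * W' l j) = (if i = j then 1 else 0)) \<and>
     (\<forall>i j. i \<notin> {1..m} \<or> j \<notin> {1..m} \<longrightarrow> W' i j = 0)" for W'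
  have PW: "P W" using WV VW by (auto simp: P_def W_def)
  have uniq: "W' = W" if "P W'" for W'
  proof (intro ext)
    fix i j
    show "W' i j = W i j"
    proof (cases "i \<in> {1..m} \<and> j \<in> {1..m}")
      case True
      have "W' i j = (\<Sum>l=1..m. W' i l * (if l = j then 1 else 0))"
        using True by (simp add: if_distrib sum.delta cong: if_cong)
      also have "\<dots> = (\<Sum>l=1..m. W' i l * (\<Sum>q=1..m. V l q * W q j))"
        using VW True by (intro sum.cong refl) auto
      also have "\<dots> = (\<Sum>q=1..m. (\<Sum>l=1..m. W' i l * V l q) * W q j)"
        by (simp add: sum_distrib_left sum_distrib_right mult.assoc) (rule sum.swap)
      also have "\<dots> = (\<Sum>q=1..m. (if i = q then 1 else 0) * W q j)"
        using that True by (intro sum.cong refl) (auto simp: P_def)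
      also have "\<dots> = (\<Sum>q=1..m. if i = q then W q j else 0)" by (intro sum.cong) auto
      also have "\<dots> = W i j" using True by (simp add: sum.delta)
      finally show ?thesis .
    next
      case False
      then show ?thesis using that by (auto simp: P_def W_def)
    qed
  qed
  have "inv_matN m V = (THE W'. P W')" unfolding inv_matN_def P_def by simp
  also have "\<dots> = W" using PW uniq by (rule the_equality)
  finally have "inv_matN m V = W" .
  then show ?thesis using WV by simp
qed


no_notation Matrix.vec_index (infixl "$" 100)
no_notation Matrix.scalar_prod (infix "\<bullet>" 70)

lemma vand_inj:
  fixes t :: "nat \<Rightarrow> real" and c :: "nat \<Rightarrow> real"
  assumes inj: "inj_on t {0..m}"
    and h: "\<forall>i\<in>{1..m}. (\<Sum>j=1..m. (t i ^ j - t (i - 1) ^ j) * c j) = 0"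
  shows "\<forall>j\<in>{1..m}. c j = 0"
proof -
  define P where "P x = (\<Sum>j=1..m. c j * x ^ j)" for x
  have step: "P (t i) = P (t (i - 1))" if "i \<in> {1..m}" for i
  proof -
    have "(\<Sum>j=1..m. (t i ^ j - t (i - 1) ^ j) * c j) = P (t i) - P (t (i - 1))"
      by (simp add: P_def sum_subtractf[symmetric] algebra_simps)
    with h that show ?thesis by auto
  qed
  have all: "i \<le> m \<Longrightarrow> P (t i) = P (t 0)" for i
  proof (induction i)
    case (Suc i)
    then show ?case using step[of "Suc i"] by auto
  qed simp
  define p where "p = (\<Sum>j=1..m. monom (c j) j)"
  have pp: "poly p x = P x" for x by (simp add: p_def P_def poly_sum poly_monom)
  have cp: "coeff p i = (if i \<in> {1..m} then c i else 0)" for i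
    by (simp add: p_def coeff_sum coeff_monom)
  have dp: "degree p \<le> m" by (rule degree_le) (auto simp: cp)
  have cardA: "card (t ` {0..m}) = Suc m" using inj by (simp add: card_image)
  have A1: "\<And>x. x \<in> t ` {0..m} \<Longrightarrow> poly p x = poly [:P (t 0):] x"
  proof -
    fix x assume "x \<in> t ` {0..m}"
    then obtain i where i: "i \<le> m" "x = t i" by auto
    show "poly p x = poly [:P (t 0):] x" unfolding i(2) pp using all[OF i(1)] by simp
  qed
  have d1: "degree p < card (t ` {0..m})" using dp cardA by simp
  have d2: "degree [:P (t 0):] < card (t ` {0..m})" using cardA by simp
  have peq: "p = [:P (t 0):]" by (rule poly_eqI_degree[OF A1 d1 d2])
  show ?thesis
  proof
    fix j assume j: "j \<in> {1..m}"
    then obtain j' where "j = Suc j'" by (cases j) auto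
    then have "coeff p j = 0" unfolding peq by simp
    then show "c j = 0" using cp j by simp
  qed
qed

lemma prod_sum_fun:
  fixes h :: "'n::finite \<Rightarrow> 'b \<Rightarrow> 'c::comm_semiring_1"
  assumes "\<And>k. finite (S k)"
  shows "(\<Prod>k\<in>UNIV. \<Sum>j\<in>S k. h k j) = (\<Sum>\<gamma>\<in>{\<gamma>. \<forall>k. \<gamma> k \<in> S k}. \<Prod>k\<in>UNIV. h k (\<gamma> k))"
proof -
  have "PiE UNIV S = {\<gamma>. \<forall>k. \<gamma> k \<in> S k}" by (auto simp: PiE_def Pi_def extensional_def)
  then show ?thesis using prod_sum_PiE[of UNIV S h] assms by simp
qed

lemma integral_poly_1d:
  fixes l u c :: real
  assumes "l \<le> u"
  shows "integral {l..u} (\<lambda>t. (t - c) ^ m) = ((u - c) ^ Suc m - (l - c) ^ Suc m) / real (Suc m)"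
proof -
  have d: "((\<lambda>t. (t - c) ^ Suc m / real (Suc m)) has_real_derivative (x - c) ^ m) (at x within {l..u})" for x
  proof -
    have "((\<lambda>t. t - c) has_real_derivative 1) (at x within {l..u})" by (auto intro!: derivative_eq_intros)
    from DERIV_power_Suc[OF this, of m]
    have "((\<lambda>t. (t - c) ^ Suc m) has_real_derivative real (Suc m) * (x - c) ^ m) (at x within {l..u})"
      by simp
    then have "((\<lambda>t. (t - c) ^ Suc m / real (Suc m)) has_real_derivative real (Suc m) * (x - c) ^ m / real (Suc m)) (at x within {l..u})"
      by (rule DERIV_cdivide)
    then show ?thesis by simp
  qed
  have "((\<lambda>t. (t - c) ^ m) has_integral ((\<lambda>t. (t - c) ^ Suc m / real (Suc m)) u - (\<lambda>t. (t - c) ^ Suc m / real (Suc m)) l)) {l..u}"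
    by (rule fundamental_theorem_of_calculus[OF assms]) (use d in \<open>auto simp: has_real_derivative_iff_has_vector_derivative\<close>)
  then show ?thesis by (simp add: integral_unique diff_divide_distrib)
qed



lemma integral_lborel_prod:
  fixes f :: "'a::euclidean_space \<Rightarrow> real \<Rightarrow> real"
  assumes "\<And>b. b \<in> Basis \<Longrightarrow> integrable lborel (f b)"
  shows "(\<integral>x. (\<Prod>b\<in>Basis. f b (x \<bullet> b)) \<partial>lborel) = (\<Prod>b\<in>Basis. \<integral>x. f b x \<partial>lborel)"
proof -
  interpret product_sigma_finite "\<lambda>_. lborel::real measure" by standard
  have m: "\<And>b. b \<in> Basis \<Longrightarrow> f b \<in> borel_measurable borel" using assms by auto
  have "(\<integral>x. (\<Prod>b\<in>Basis. f b (x \<bullet> b)) \<partial>lborel) = 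
     (\<integral>x. (\<Prod>b\<in>Basis. f b ((\<Sum>b\<in>Basis. x b *\<^sub>R b) \<bullet> b)) \<partial>(\<Pi>\<^sub>M b\<in>Basis. lborel))"
    apply (subst lborel_eq[where 'a='a])
    apply (subst integral_distr)
    using m by auto
  also have "\<dots> = (\<integral>x. (\<Prod>b\<in>Basis. f b (x b)) \<partial>(\<Pi>\<^sub>M b\<in>Basis. lborel))"
    by (intro Bochner_Integration.integral_cong refl prod.cong) (auto simp: inner_sum_left inner_Basis if_distrib sum.delta cong: if_cong)
  also have "\<dots> = (\<Prod>b\<in>Basis. \<integral>x. f b x \<partial>lborel)"
    using assms by (simp add: product_integral_prod)
  finally show ?thesis .
qed

lemma integral_cbox_prod:
  fixes h :: "'a::euclidean_space \<Rightarrow> real \<Rightarrow> real"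
  assumes cont: "\<And>b. b \<in> Basis \<Longrightarrow> continuous_on UNIV (h b)"
  shows "integral (cbox l u) (\<lambda>x. \<Prod>b\<in>Basis. h b (x \<bullet> b)) = (\<Prod>b\<in>Basis. integral {l \<bullet> b..u \<bullet> b} (h b))"
proof -
  let ?H = "\<lambda>x. \<Prod>b\<in>Basis. h b (x \<bullet> b)"
  have cH: "continuous_on UNIV ?H"
    by (intro continuous_on_prod continuous_on_compose2[OF cont] continuous_intros) auto
  have int: "integrable lborel (\<lambda>x. indicator (cbox l u) x *\<^sub>R ?H x)"
    by (rule borel_integrable_compact) (auto intro: continuous_on_subset[OF cH])
  have int1: "integrable lborel (\<lambda>t. indicator {l \<bullet> b..u \<bullet> b} t *\<^sub>R h b t)" if "b \<in> Basis" for b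
    by (rule borel_integrable_compact) (auto intro: continuous_on_subset[OF cont[OF that]])
  have "integral (cbox l u) ?H = integral UNIV (\<lambda>x. indicator (cbox l u) x *\<^sub>R ?H x)"
  proof -
    have "(\<lambda>x. indicator (cbox l u) x *\<^sub>R ?H x) = (\<lambda>x. if x \<in> cbox l u then ?H x else 0)"
      by (auto simp: indicator_def fun_eq_iff)
    then show ?thesis by (simp only: integral_restrict_UNIV)
  qed
  also have "\<dots> = (\<integral>x. indicator (cbox l u) x *\<^sub>R ?H x \<partial>lborel)"
    by (rule integral_lborel[OF int])
  also have "\<dots> = (\<integral>x. (\<Prod>b\<in>Basis. indicator {l \<bullet> b..u \<bullet> b} (x \<bullet> b) *\<^sub>R h b (x \<bullet> b)) \<partial>lborel)"
  proof (intro Bochner_Integration.integral_cong refl)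
    fix x
    have "indicator (cbox l u) x = (\<Prod>b\<in>Basis. indicator {l \<bullet> b..u \<bullet> b} (x \<bullet> b) :: real)"
    proof (cases "x \<in> cbox l u")
      case True
      then have "\<forall>b\<in>Basis. indicator {l \<bullet> b..u \<bullet> b} (x \<bullet> b) = (1::real)"
        by (simp add: mem_box)
      then show ?thesis using True by simp
    next
      case False
      then obtain b where b: "b \<in> Basis" "x \<bullet> b \<notin> {l \<bullet> b..u \<bullet> b}"
        by (auto simp: mem_box)
      then have "(\<Prod>b\<in>Basis. indicator {l \<bullet> b..u \<bullet> b} (x \<bullet> b) :: real) = 0"
        by (intro prod_zero) (auto intro!: bexI[of _ b] simp: indicator_def)
      then show ?thesis using False by simp
    qed
    then show "indicator (cbox l u) x *\<^sub>R ?H x = (\<Prod>b\<in>Basis. indicator {l \<bullet> b..u \<bullet> b} (x \<bullet> b) *\<^sub>R h b (x \<bullet> b))"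
      by (simp add: prod.distrib)
  qed
  also have "\<dots> = (\<Prod>b\<in>Basis. \<integral>t. indicator {l \<bullet> b..u \<bullet> b} t *\<^sub>R h b t \<partial>lborel)"
    by (rule integral_lborel_prod[where f = "\<lambda>b t. indicator {l \<bullet> b..u \<bullet> b} t *\<^sub>R h b t"]) (use int1 in auto)
  also have "\<dots> = (\<Prod>b\<in>Basis. integral {l \<bullet> b..u \<bullet> b} (h b))"
  proof (intro prod.cong refl)
    fix b :: 'a assume "b \<in> Basis"
    have "(\<integral>t. indicator {l \<bullet> b..u \<bullet> b} t *\<^sub>R h b t \<partial>lborel) = integral UNIV (\<lambda>t. indicator {l \<bullet> b..u \<bullet> b} t *\<^sub>R h b t)"
      by (rule integral_lborel[OF int1[OF \<open>b \<in> Basis\<close>], symmetric])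
    also have "\<dots> = integral {l \<bullet> b..u \<bullet> b} (h b)"
    proof -
      have "(\<lambda>t. indicator {l \<bullet> b..u \<bullet> b} t *\<^sub>R h b t) = (\<lambda>t. if t \<in> {l \<bullet> b..u \<bullet> b} then h b t else 0)"
        by (auto simp: indicator_def fun_eq_iff)
      then show ?thesis by (simp only: integral_restrict_UNIV)
    qed
    finally show "(\<integral>t. indicator {l \<bullet> b..u \<bullet> b} t *\<^sub>R h b t \<partial>lborel) = integral {l \<bullet> b..u \<bullet> b} (h b)" .
  qed
  finally show ?thesis .
qed

lemma prod_Basis_cart: "(\<Prod>b\<in>(Basis :: (real^'n) set). m (axis_index b)) = (\<Prod>k\<in>UNIV. m k)"
  by (simp add: Basis_vec_def UNION_singleton_eq_range prod.reindex axis_eq_axis inj_on_def)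

lemma integral_cbox_prod_cart:
  fixes h :: "'n::finite \<Rightarrow> real \<Rightarrow> real" and l u :: "real^'n"
  assumes cont: "\<And>k. continuous_on UNIV (h k)"
  shows "integral (cbox l u) (\<lambda>x. \<Prod>k\<in>UNIV. h k (x $ k)) = (\<Prod>k\<in>UNIV. integral {l $ k..u $ k} (h k))"
proof -
  have e1: "(\<lambda>x::real^'n. \<Prod>k\<in>UNIV. h k (x $ k)) = (\<lambda>x. \<Prod>b\<in>Basis. h (axis_index b) (x \<bullet> b))"
  proof
    fix x :: "real^'n"
    have "(\<Prod>b\<in>Basis. h (axis_index b) (x \<bullet> b)) = (\<Prod>b\<in>(Basis :: (real^'n) set). (\<lambda>k. h k (x $ k)) (axis_index b))"
      by (intro prod.cong refl) (metis axis_index cart_eq_inner_axis)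
    then show "(\<Prod>k\<in>UNIV. h k (x $ k)) = (\<Prod>b\<in>Basis. h (axis_index b) (x \<bullet> b))"
      using prod_Basis_cart[of "\<lambda>k. h k (x $ k)"] by simp
  qed
  have "integral (cbox l u) (\<lambda>x. \<Prod>b\<in>Basis. h (axis_index b) (x \<bullet> b)) = (\<Prod>b\<in>(Basis :: (real^'n) set). integral {l \<bullet> b..u \<bullet> b} (h (axis_index b)))"
    by (rule integral_cbox_prod) (use cont in auto)
  also have "\<dots> = (\<Prod>b\<in>(Basis :: (real^'n) set). (\<lambda>k. integral {l $ k..u $ k} (h k)) (axis_index b))"
    by (intro prod.cong refl) (metis axis_index cart_eq_inner_axis)
  also have "\<dots> = (\<Prod>k\<in>UNIV. integral {l $ k..u $ k} (h k))" by (rule prod_Basis_cart)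
  finally show ?thesis using e1 by simp
qed



lemma region_has_integral:
  fixes u1 u2 :: "'a::euclidean_space \<Rightarrow> real"
  assumes c1: "continuous_on UNIV u1" and c2: "continuous_on UNIV u2"
    and le: "\<And>x. x \<in> cbox l u \<Longrightarrow> u1 x \<le> u2 x"
  shows "((\<lambda>z. 1::real) has_integral integral (cbox l u) (\<lambda>x. u2 x - u1 x))
           {z. fst z \<in> cbox l u \<and> u1 (fst z) \<le> snd z \<and> snd z \<le> u2 (fst z)}"
proof -
  let ?B = "cbox l u"
  let ?S = "{z. fst z \<in> ?B \<and> u1 (fst z) \<le> snd z \<and> snd z \<le> u2 (fst z)}"
  let ?r = "integral ?B (\<lambda>x. u2 x - u1 x)"
  have cd: "continuous_on UNIV (\<lambda>x. u2 x - u1 x)" using c1 c2 by (intro continuous_intros)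
  have hi: "((\<lambda>x. u2 x - u1 x) has_integral ?r) ?B"
    using integrable_continuous[OF continuous_on_subset[OF cd]] by (simp add: integrable_integral)
  have r0: "0 \<le> ?r" by (rule has_integral_nonneg[OF hi]) (use le in auto)
  have closedS: "closed ?S"
  proof -
    have e: "?S = (?B \<times> UNIV) \<inter> {z. u1 (fst z) - snd z \<le> 0} \<inter> {z. snd z - u2 (fst z) \<le> 0}" by auto
    have c0: "closed (?B \<times> (UNIV :: real set))"
      by (intro closed_Times closed_cbox closed_UNIV)
    have c1: "closed {z::'a \<times> real. u1 (fst z) - snd z \<le> 0}"
      by (rule closed_Collect_le) (intro continuous_intros continuous_on_compose2[OF c1], auto)
    have c2: "closed {z::'a \<times> real. snd z - u2 (fst z) \<le> 0}"
      by (rule closed_Collect_le) (intro continuous_intros continuous_on_compose2[OF c2], auto)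
    show ?thesis unfolding e by (intro closed_Int c0 c1 c2)
  qed
  then have Sb: "?S \<in> sets borel" by (rule borel_closed)
  have Sb2: "?S \<in> sets (lborel \<Otimes>\<^sub>M lborel)" using Sb by (subst lborel_prod) simp
  have "emeasure lborel ?S = emeasure (lborel \<Otimes>\<^sub>M (lborel :: real measure)) ?S"
    by (simp add: lborel_prod)
  also have "\<dots> = (\<integral>\<^sup>+x. emeasure lborel (Pair x -` ?S) \<partial>lborel)"
    by (rule lborel.emeasure_pair_measure_alt[OF Sb2])
  also have "\<dots> = (\<integral>\<^sup>+x. ennreal (u2 x - u1 x) * indicator ?B x \<partial>lborel)"
  proof (intro nn_integral_cong)
    fix x :: 'a
    show "emeasure lborel (Pair x -` ?S) = ennreal (u2 x - u1 x) * indicator ?B x"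
    proof (cases "x \<in> ?B")
      case True
      then have "Pair x -` ?S = {u1 x..u2 x}" by auto
      then show ?thesis using True le[OF True] by simp
    next
      case False
      then have "Pair x -` ?S = {}" by auto
      then show ?thesis using False by simp
    qed
  qed
  also have "\<dots> = ennreal ?r"
    by (rule nn_integral_has_integral_lebesgue'[OF _ hi]) (use le in auto)
  finally have "emeasure lborel ?S = ennreal ?r" .
  then show ?thesis using has_integral_iff_emeasure_lborel[OF Sb r0] by simp
qed

lemma theta_integral_up:
  fixes F :: "'a::euclidean_space \<times> real \<Rightarrow> real" and h :: "'a \<Rightarrow> real"
  assumes ch: "continuous_on UNIV h"
    and rng: "\<And>x. x \<in> cbox l u \<Longrightarrow> r \<le> h x \<and> h x \<le> s"
    and F: "\<And>x y. x \<in> cbox l u \<Longrightarrow> y \<in> {r..s} \<Longrightarrow> F (x, y) = (if h x \<le> y then 1 else 0)"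
  shows "integral (cbox l u \<times> {r..s}) F = measure lborel (cbox l u) * s - integral (cbox l u) h"
proof -
  let ?S = "{z. fst z \<in> cbox l u \<and> h (fst z) \<le> snd z \<and> snd z \<le> (\<lambda>_. s) (fst z)}"
  have hs: "((\<lambda>z. 1::real) has_integral integral (cbox l u) (\<lambda>x. s - h x)) ?S"
    by (rule region_has_integral[OF ch continuous_on_const]) (use rng in auto)
  have "(\<lambda>z. if z \<in> cbox l u \<times> {r..s} then F z else 0) = (\<lambda>z. if z \<in> ?S then 1 else 0)"
  proof
    fix z :: "'a \<times> real"
    obtain x y where z: "z = (x, y)" by (cases z)
    show "(if z \<in> cbox l u \<times> {r..s} then F z else 0) = (if z \<in> ?S then 1 else 0)"
      using F[of x y] rng[of x] unfolding z by auto
  qed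
  then have "integral (cbox l u \<times> {r..s}) F = integral ?S (\<lambda>z. 1::real)"
  proof -
    assume eq: "(\<lambda>z. if z \<in> cbox l u \<times> {r..s} then F z else 0) = (\<lambda>z. if z \<in> ?S then 1 else 0)"
    have "integral (cbox l u \<times> {r..s}) F = integral UNIV (\<lambda>z. if z \<in> cbox l u \<times> {r..s} then F z else 0)"
      by (rule integral_restrict_UNIV[symmetric])
    also have "\<dots> = integral UNIV (\<lambda>z. if z \<in> ?S then 1 else 0)" by (simp only: eq)
    also have "\<dots> = integral ?S (\<lambda>z. 1::real)" by (rule integral_restrict_UNIV)
    finally show ?thesis .
  qed
  also have "\<dots> = integral (cbox l u) (\<lambda>x. s - h x)" using hs by (rule integral_unique)
  also have "\<dots> = measure lborel (cbox l u) * s - integral (cbox l u) h"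
  proof -
    have "h integrable_on cbox l u"
      using integrable_continuous[OF continuous_on_subset[OF ch]] by simp
    then have "integral (cbox l u) (\<lambda>x. s - h x) = integral (cbox l u) (\<lambda>x. s) - integral (cbox l u) h"
      by (intro integral_diff integrable_const)
    then show ?thesis by simp
  qed
  finally show ?thesis .
qed

lemma theta_integral_down:
  fixes F :: "'a::euclidean_space \<times> real \<Rightarrow> real" and h :: "'a \<Rightarrow> real"
  assumes ch: "continuous_on UNIV h"
    and rng: "\<And>x. x \<in> cbox l u \<Longrightarrow> r \<le> h x \<and> h x \<le> s"
    and F: "\<And>x y. x \<in> cbox l u \<Longrightarrow> y \<in> {r..s} \<Longrightarrow> F (x, y) = (if y \<le> h x then 1 else 0)"
  shows "integral (cbox l u \<times> {r..s}) F = integral (cbox l u) h - measure lborel (cbox l u) * r"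
proof -
  let ?S = "{z. fst z \<in> cbox l u \<and> (\<lambda>_. r) (fst z) \<le> snd z \<and> snd z \<le> h (fst z)}"
  have hs: "((\<lambda>z. 1::real) has_integral integral (cbox l u) (\<lambda>x. h x - r)) ?S"
    by (rule region_has_integral[OF continuous_on_const ch]) (use rng in auto)
  have "(\<lambda>z. if z \<in> cbox l u \<times> {r..s} then F z else 0) = (\<lambda>z. if z \<in> ?S then 1 else 0)"
  proof
    fix z :: "'a \<times> real"
    obtain x y where z: "z = (x, y)" by (cases z)
    show "(if z \<in> cbox l u \<times> {r..s} then F z else 0) = (if z \<in> ?S then 1 else 0)"
      using F[of x y] rng[of x] unfolding z by auto
  qed
  then have "integral (cbox l u \<times> {r..s}) F = integral ?S (\<lambda>z. 1::real)"
  proof -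
    assume eq: "(\<lambda>z. if z \<in> cbox l u \<times> {r..s} then F z else 0) = (\<lambda>z. if z \<in> ?S then 1 else 0)"
    have "integral (cbox l u \<times> {r..s}) F = integral UNIV (\<lambda>z. if z \<in> cbox l u \<times> {r..s} then F z else 0)"
      by (rule integral_restrict_UNIV[symmetric])
    also have "\<dots> = integral UNIV (\<lambda>z. if z \<in> ?S then 1 else 0)" by (simp only: eq)
    also have "\<dots> = integral ?S (\<lambda>z. 1::real)" by (rule integral_restrict_UNIV)
    finally show ?thesis .
  qed
  also have "\<dots> = integral (cbox l u) (\<lambda>x. h x - r)" using hs by (rule integral_unique)
  also have "\<dots> = integral (cbox l u) h - measure lborel (cbox l u) * r"
  proof -
    have "h integrable_on cbox l u"
      using integrable_continuous[OF continuous_on_subset[OF ch]] by simp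
    then have "integral (cbox l u) (\<lambda>x. h x - r) = integral (cbox l u) h - integral (cbox l u) (\<lambda>x. r)"
      by (intro integral_diff integrable_const)
    then show ?thesis by simp
  qed
  finally show ?thesis .
qed



lemma sign_facts:
  fixes f :: "'x \<Rightarrow> real \<Rightarrow> real" and c r s :: real
  assumes rc: "r < c" and cs: "c < s"
    and key: "\<And>y. y \<in> {r..s} \<Longrightarrow> (0 \<le> f x y) \<longleftrightarrow> (if pos then c \<le> y else y \<le> c)"
  shows "one_jump_on (sign_y f x) {r..s}"
    and "n_y f {r..s} x = (if pos then 1 else -1)"
    and "\<And>y. y \<in> {r..s} \<Longrightarrow> Theta_y f x y = (if pos then (if c \<le> y then 1 else 0) else (if y \<le> c then 1 else 0))"
proof -
  let ?I = "{r..s}"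
  let ?P = "\<lambda>y. if pos then c \<le> y else y \<le> c"
  define \<sigma> where "\<sigma> = sign_y f x"
  have sig: "\<And>y. y \<in> ?I \<Longrightarrow> \<sigma> y = (if ?P y then 1 else -1)"
    using key by (simp add: \<sigma>_def sign_y_def)
  have cI: "c \<in> ?I" using rc cs by auto
  have cont: "continuous (at y within ?I) \<sigma>" if y: "y \<in> ?I" "y \<noteq> c" for y
  proof -
    have ev: "eventually (\<lambda>z. \<sigma> z = \<sigma> y) (at y within ?I)"
      unfolding eventually_at
    proof (intro exI[of _ "\<bar>y - c\<bar>"] conjI ballI impI)
      show "0 < \<bar>y - c\<bar>" using y by simp
      fix z assume z: "z \<in> ?I" "z \<noteq> y \<and> dist z y < \<bar>y - c\<bar>"
      then have "?P z = ?P y" using y by (auto simp: dist_real_def)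
      then show "\<sigma> z = \<sigma> y" using sig[OF z(1)] sig[OF y(1)] by simp
    qed
    show ?thesis unfolding continuous_within by (rule tendsto_eventually[OF ev])
  qed
  have discont: "\<not> continuous (at c within ?I) \<sigma>"
  proof
    assume "continuous (at c within ?I) \<sigma>"
    then have ce: "\<forall>e>0. \<exists>d>0. \<forall>z\<in>?I. dist z c < d \<longrightarrow> dist (\<sigma> z) (\<sigma> c) < e"
      by (simp only: continuous_within_eps_delta)
    have "\<exists>d>0. \<forall>z\<in>?I. dist z c < d \<longrightarrow> dist (\<sigma> z) (\<sigma> c) < 1"
      using ce[rule_format, of 1] by simp
    then obtain d where d: "d > 0" "\<And>z. z \<in> ?I \<Longrightarrow> dist z c < d \<Longrightarrow> dist (\<sigma> z) (\<sigma> c) < 1"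
      by blast
    have sc: "\<sigma> c = 1" using sig[OF cI] by simp
    show False
    proof (cases pos)
      case True
      define z where "z = max r (c - d / 2)"
      have z: "z \<in> ?I" "dist z c < d" "z < c" using rc cs d(1) by (auto simp: z_def dist_real_def)
      then have "\<sigma> z = -1" using sig[OF z(1)] True by auto
      then show False using d(2)[OF z(1,2)] sc by (simp add: dist_real_def)
    next
      case False
      define z where "z = min s (c + d / 2)"
      have z: "z \<in> ?I" "dist z c < d" "z > c" using rc cs d(1) by (auto simp: z_def dist_real_def)
      then have "\<sigma> z = -1" using sig[OF z(1)] False by auto
      then show False using d(2)[OF z(1,2)] sc by (simp add: dist_real_def)
    qed
  qed
  have uniq: "\<exists>!c'. c' \<in> ?I \<and> \<not> continuous (at c' within ?I) \<sigma>"
  proof (rule ex1I[of _ c])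
    show "c \<in> ?I \<and> \<not> continuous (at c within ?I) \<sigma>" using cI discont by simp
    fix c' assume "c' \<in> ?I \<and> \<not> continuous (at c' within ?I) \<sigma>"
    then show "c' = c" using cont by auto
  qed
  have lims: "\<exists>L R. (\<sigma> \<longlongrightarrow> L) (at_left c) \<and> (\<sigma> \<longlongrightarrow> R) (at_right c) \<and> L \<noteq> R"
  proof -
    have evl: "eventually (\<lambda>z. \<sigma> z = (if pos then -1 else 1)) (at_left c)"
      using eventually_at_left_real[OF rc] by eventually_elim (use rc cs in \<open>auto simp: sig\<close>)
    have evr: "eventually (\<lambda>z. \<sigma> z = (if pos then 1 else -1)) (at_right c)"
      using eventually_at_right_real[OF cs] by eventually_elim (use rc cs in \<open>auto simp: sig\<close>)
    show ?thesis
      by (rule exI[of _ "if pos then -1 else 1"], rule exI[of _ "if pos then 1 else -1"])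
         (use tendsto_eventually[OF evl] tendsto_eventually[OF evr] in auto)
  qed
  have "\<forall>c'\<in>?I. \<not> continuous (at c' within ?I) \<sigma> \<longrightarrow> c' \<in> interior ?I \<and> (\<exists>L R. (\<sigma> \<longlongrightarrow> L) (at_left c') \<and> (\<sigma> \<longlongrightarrow> R) (at_right c') \<and> L \<noteq> R)"
  proof (intro ballI impI)
    fix c' assume c': "c' \<in> ?I" "\<not> continuous (at c' within ?I) \<sigma>"
    then have "c' = c" using cont by blast
    then show "c' \<in> interior ?I \<and> (\<exists>L R. (\<sigma> \<longlongrightarrow> L) (at_left c') \<and> (\<sigma> \<longlongrightarrow> R) (at_right c') \<and> L \<noteq> R)"
      using lims rc cs by simp
  qed
  then show "one_jump_on (sign_y f x) {r..s}"
    using uniq unfolding one_jump_on_def \<sigma>_def by (intro conjI)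
  show "n_y f {r..s} x = (if pos then 1 else -1)"
  proof (cases pos)
    case True
    have "mono_on ?I \<sigma>"
    proof (rule mono_onI)
      fix y1 y2 assume "y1 \<in> ?I" "y2 \<in> ?I" "y1 \<le> y2"
      then show "\<sigma> y1 \<le> \<sigma> y2" using sig True by auto
    qed
    then show ?thesis using True by (simp add: n_y_def \<sigma>_def)
  next
    case False
    have "\<not> mono_on ?I \<sigma>"
    proof
      assume m: "mono_on ?I \<sigma>"
      have "\<sigma> r \<le> \<sigma> s" using mono_onD[OF m, of r s] rc cs by auto
      moreover have "\<sigma> r = 1" "\<sigma> s = -1" using sig[of r] sig[of s] rc cs False by auto
      ultimately show False by simp
    qed
    then show ?thesis using False by (simp add: n_y_def \<sigma>_def)
  qed
  show "\<And>y. y \<in> {r..s} \<Longrightarrow> Theta_y f x y = (if pos then (if c \<le> y then 1 else 0) else (if y \<le> c then 1 else 0))"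
    using key by (simp add: Theta_y_def)
qed

lemma local_box_lemma:
  fixes f :: "real^'n \<Rightarrow> real \<Rightarrow> real"
    and f' :: "((real^'n) \<times> real) \<Rightarrow> ((real^'n) \<times> real) \<Rightarrow>\<^sub>L real"
    and a :: "real^'n" and b :: real and g :: "real^'n \<Rightarrow> real"
  assumes deriv: "\<And>z. ((\<lambda>z. f (fst z) (snd z)) has_derivative blinfun_apply (f' z)) (at z)"
    and cont_deriv: "continuous_on UNIV f'"
    and dy: "blinfun_apply (f' (a, b)) (0, 1) \<noteq> 0"
    and cg: "continuous_on UNIV g"
    and g_at: "g a = b"
    and g_impl: "\<exists>U. open U \<and> a \<in> U \<and> (\<forall>x\<in>U. f x (g x) = 0)"
  shows "\<exists>\<xi> \<eta> :: real^'n. \<exists>r s :: real. \<exists>pos.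
           (\<forall>k. \<xi> $ k < \<eta> $ k) \<and> a \<in> cbox \<xi> \<eta> \<and> r < s \<and> b \<in> {r..s} \<and>
           (\<forall>x\<in>cbox \<xi> \<eta>. r < g x \<and> g x < s \<and>
              (\<forall>y\<in>{r..s}. (0 \<le> f x y) \<longleftrightarrow> (if pos then g x \<le> y else y \<le> g x)))"
proof -
  define fy where "fy z = blinfun_apply (f' z) (0, 1)" for z
  have pd: "((\<lambda>y. f x y) has_real_derivative fy (x, y)) (at y)" for x y
  proof -
    have p: "((\<lambda>y. (x, y)) has_derivative (\<lambda>h. (0, h))) (at y)"
      by (rule has_derivative_Pair[OF has_derivative_const has_derivative_ident])
    have "((\<lambda>y. (\<lambda>z. f (fst z) (snd z)) (x, y)) has_derivative (\<lambda>h. blinfun_apply (f' (x, y)) (0, h))) (at y)"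
      by (rule has_derivative_compose[OF p]) (use deriv in simp)
    then have "((\<lambda>y. f x y) has_derivative (\<lambda>h. blinfun_apply (f' (x, y)) (0, h))) (at y)" by simp
    then show ?thesis
    proof (rule has_derivative_imp_has_field_derivative)
      fix h :: real
      have e: "blinfun_apply (f' (x, y)) (h *\<^sub>R (0, 1)) = h *\<^sub>R blinfun_apply (f' (x, y)) (0, 1)"
        by (rule blinfun.scaleR_right)
      then show "h * fy (x, y) = blinfun_apply (f' (x, y)) (0, h)"
        by (simp add: fy_def)
    qed
  qed
  have cfy: "continuous_on UNIV fy"
    unfolding fy_def by (rule blinfun.continuous_on[OF cont_deriv continuous_on_const])
  define c0 where "c0 = fy (a, b)"
  have c0: "c0 \<noteq> 0" using dy by (simp add: c0_def fy_def)
  have "isCont fy (a, b)" using cfy by (simp add: continuous_on_eq_continuous_at)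
  then obtain \<delta> where \<delta>: "\<delta> > 0" "\<And>z. dist z (a, b) < \<delta> \<Longrightarrow> dist (fy z) c0 < \<bar>c0\<bar>"
    unfolding continuous_at_eps_delta c0_def using c0 c0_def by (metis zero_less_abs_iff)
  define pos where "pos = (c0 > 0)"
  have sgn: "\<And>z. dist z (a, b) < \<delta> \<Longrightarrow> (if pos then fy z > 0 else fy z < 0)"
  proof -
    fix z assume "dist z (a, b) < \<delta>"
    then have "\<bar>fy z - c0\<bar> < \<bar>c0\<bar>" using \<delta>(2) by (simp add: dist_real_def)
    then show "if pos then fy z > 0 else fy z < 0" using c0 unfolding pos_def by (auto split: if_splits)
  qed
  define e where "e = \<delta> / 3"
  have e: "e > 0" using \<delta> by (simp add: e_def)
  have "isCont g a" using cg by (simp add: continuous_on_eq_continuous_at)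
  then obtain d1 where d1: "d1 > 0" "\<And>x. dist x a < d1 \<Longrightarrow> dist (g x) b < e"
    unfolding continuous_at_eps_delta using e g_at by metis
  obtain U where U: "open U" "a \<in> U" "\<And>x. x \<in> U \<Longrightarrow> f x (g x) = 0" using g_impl by blast
  then obtain d2 where d2: "d2 > 0" "ball a d2 \<subseteq> U" using open_contains_ball by blast
  define \<rho> where "\<rho> = min (min d1 d2) e"
  have \<rho>: "\<rho> > 0" using d1 d2 e by (simp add: \<rho>_def)
  obtain \<xi> \<eta> :: "real^'n" where box: "cbox \<xi> \<eta> \<subseteq> ball a \<rho>" "a \<in> box \<xi> \<eta>"
  proof -
    obtain l u :: "real^'n" where "cbox l u \<subseteq> ball a \<rho>" "a \<in> box l u"
      using open_contains_cbox[of "ball a \<rho>" a] \<rho> by (metis centre_in_ball open_ball)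
    then show ?thesis using that by blast
  qed
  have lt: "\<forall>k. \<xi> $ k < \<eta> $ k" using box(2) by (auto simp: mem_box_cart) (meson less_trans)
  have aR: "a \<in> cbox \<xi> \<eta>" using box(2) box_subset_cbox by blast
  define r where "r = b - e"
  define s where "s = b + e"
  have rs: "r < s" "b \<in> {r..s}" using e by (auto simp: r_def s_def)
  have main: "r < g x \<and> g x < s \<and> (\<forall>y\<in>{r..s}. (0 \<le> f x y) \<longleftrightarrow> (if pos then g x \<le> y else y \<le> g x))"
    if x: "x \<in> cbox \<xi> \<eta>" for x
  proof -
    have dx: "dist x a < \<rho>" using box(1) x by (auto simp: dist_commute)
    have gx: "dist (g x) b < e" using d1(2)[of x] dx by (simp add: \<rho>_def)
    then have gr: "r < g x" "g x < s" by (auto simp: r_def s_def dist_real_def)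
    have "x \<in> U" using d2(2) dx by (auto simp: \<rho>_def dist_commute)
    then have f0: "f x (g x) = 0" by (rule U(3))
    have near: "dist (x, t) (a, b) < \<delta>" if "t \<in> {r..s}" for t
    proof -
      have "dist (x, t) (a, b) = norm (x - a, t - b)" by (simp add: dist_norm)
      also have "\<dots> \<le> norm (x - a) + norm (t - b)" by (rule norm_Pair_le)
      also have "\<dots> < \<delta>" using dx that by (auto simp: \<rho>_def r_def s_def e_def dist_norm)
      finally show ?thesis .
    qed
    have incr: "f x y1 < f x y2" if "pos" "y1 \<in> {r..s}" "y2 \<in> {r..s}" "y1 < y2" for y1 y2
    proof (rule DERIV_pos_imp_increasing[OF that(4)])
      fix t assume "y1 \<le> t" "t \<le> y2"
      then have "t \<in> {r..s}" using that by auto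
      then show "\<exists>y. DERIV (f x) t :> y \<and> y > 0" using pd[of x t] sgn[OF near] that(1) by auto
    qed
    have decr: "f x y1 > f x y2" if "\<not> pos" "y1 \<in> {r..s}" "y2 \<in> {r..s}" "y1 < y2" for y1 y2
    proof (rule DERIV_neg_imp_decreasing[OF that(4)])
      fix t assume "y1 \<le> t" "t \<le> y2"
      then have "t \<in> {r..s}" using that by auto
      then show "\<exists>y. DERIV (f x) t :> y \<and> y < 0" using pd[of x t] sgn[OF near] that(1) by auto
    qed
    have gI: "g x \<in> {r..s}" using gr by auto
    have "(0 \<le> f x y) \<longleftrightarrow> (if pos then g x \<le> y else y \<le> g x)" if y: "y \<in> {r..s}" for y
    proof (cases pos)
      case True
      show ?thesis
      proof (cases "g x < y")
        case True
        then show ?thesis using incr[OF \<open>pos\<close> gI y] f0 \<open>pos\<close> by auto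
      next
        case False
        then have "y = g x \<or> y < g x" by auto
        then show ?thesis using incr[OF \<open>pos\<close> y gI] f0 \<open>pos\<close> by auto
      qed
    next
      case False
      show ?thesis
      proof (cases "g x < y")
        case True
        then show ?thesis using decr[OF \<open>\<not> pos\<close> gI y] f0 \<open>\<not> pos\<close> by auto
      next
        case False
        then have "y = g x \<or> y < g x" by auto
        then show ?thesis using decr[OF \<open>\<not> pos\<close> y gI] f0 \<open>\<not> pos\<close> by auto
      qed
    qed
    then show ?thesis using gr by auto
  qed
  show ?thesis using lt aR rs main by blast
qed




lemma finite_idx:
  assumes "\<And>k. finite (S k)"
  shows "finite {\<gamma>::'n::finite \<Rightarrow> 'b. \<forall>k. \<gamma> k \<in> S k}"
proof -
  have "PiE UNIV S = {\<gamma>. \<forall>k. \<gamma> k \<in> S k}" by (auto simp: PiE_def Pi_def extensional_def)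
  then show ?thesis using finite_PiE[of UNIV S] assms by simp
qed

lemma finite_idx_le: "finite {\<gamma>::'n::finite \<Rightarrow> nat. \<forall>k. \<gamma> k \<le> M k}"
  using finite_idx[of "\<lambda>k. {..M k}"] by simp

lemma binom_1d:
  fixes x a :: real
  assumes "n \<le> M"
  shows "x ^ n = (\<Sum>j\<le>M. real (n choose j) * a ^ (n - j) * (x - a) ^ j)"
proof -
  have "x ^ n = ((x - a) + a) ^ n" by simp
  also have "\<dots> = (\<Sum>j\<le>n. real (n choose j) * (x - a) ^ j * a ^ (n - j))"
    by (rule binomial_ring)
  also have "\<dots> = (\<Sum>j\<le>n. real (n choose j) * a ^ (n - j) * (x - a) ^ j)"
    by (simp add: algebra_simps)
  also have "\<dots> = (\<Sum>j\<le>M. real (n choose j) * a ^ (n - j) * (x - a) ^ j)"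
    by (rule sum.mono_neutral_left) (use assms in auto)
  finally show ?thesis .
qed

definition ecoef :: "(('n::finite \<Rightarrow> nat) \<Rightarrow> real) \<Rightarrow> real^'n \<Rightarrow> ('n \<Rightarrow> nat) \<Rightarrow> real" where
  "ecoef p a \<gamma> = (\<Sum>\<beta>\<in>{\<beta>. p \<beta> \<noteq> 0}. p \<beta> * (\<Prod>k\<in>UNIV. real (\<beta> k choose \<gamma> k) * (a $ k) ^ (\<beta> k - \<gamma> k)))"

lemma deg_in_ge:
  assumes fin: "finite {\<beta>. p \<beta> \<noteq> 0}" and "p \<beta> \<noteq> 0"
  shows "\<beta> k \<le> deg_in p k"
proof -
  have "finite {\<beta> k | \<beta>. p \<beta> \<noteq> 0}"
  proof -
    have "{\<beta> k | \<beta>. p \<beta> \<noteq> 0} = (\<lambda>\<beta>. \<beta> k) ` {\<beta>. p \<beta> \<noteq> 0}" by auto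
    then show ?thesis using fin by simp
  qed
  then show ?thesis unfolding deg_in_def using assms(2) by (intro Max_ge) auto
qed

lemma poly_expand:
  fixes p :: "('n::finite \<Rightarrow> nat) \<Rightarrow> real"
  assumes fin: "finite {\<beta>. p \<beta> \<noteq> 0}" and deg: "\<forall>k. deg_in p k < N k"
  shows "poly_eval p x = (\<Sum>\<gamma>\<in>{\<gamma>. \<forall>k. \<gamma> k \<le> N k - 1}. ecoef p a \<gamma> * (\<Prod>k\<in>UNIV. (x $ k - a $ k) ^ \<gamma> k))"
proof -
  let ?S = "{\<beta>. p \<beta> \<noteq> 0}"
  let ?B = "{\<gamma>. \<forall>k. \<gamma> k \<le> N k - 1}"
  let ?C = "\<lambda>\<beta> \<gamma>. (\<Prod>k\<in>UNIV. real (\<beta> k choose \<gamma> k) * (a $ k) ^ (\<beta> k - \<gamma> k))"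
  let ?M = "\<lambda>\<gamma>. (\<Prod>k\<in>UNIV. (x $ k - a $ k) ^ \<gamma> k)"
  have mon: "(\<Prod>k\<in>UNIV. (x $ k) ^ \<beta> k) = (\<Sum>\<gamma>\<in>?B. ?C \<beta> \<gamma> * ?M \<gamma>)" if b: "\<beta> \<in> ?S" for \<beta>
  proof -
    have le: "\<beta> k \<le> N k - 1" for k using deg_in_ge[OF fin, of \<beta> k] b deg[rule_format, of k] by simp
    have "(\<Prod>k\<in>UNIV. (x $ k) ^ \<beta> k) = (\<Prod>k\<in>UNIV. \<Sum>j\<in>{..N k - 1}. real (\<beta> k choose j) * (a $ k) ^ (\<beta> k - j) * (x $ k - a $ k) ^ j)"
      by (intro prod.cong refl binom_1d le)
    also have "\<dots> = (\<Sum>\<gamma>\<in>{\<gamma>. \<forall>k. \<gamma> k \<in> {..N k - 1}}. \<Prod>k\<in>UNIV. real (\<beta> k choose \<gamma> k) * (a $ k) ^ (\<beta> k - \<gamma> k) * (x $ k - a $ k) ^ \<gamma> k)"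
      by (rule prod_sum_fun) simp
    also have "\<dots> = (\<Sum>\<gamma>\<in>?B. ?C \<beta> \<gamma> * ?M \<gamma>)"
      by (simp add: prod.distrib)
    finally show ?thesis .
  qed
  have "poly_eval p x = (\<Sum>\<beta>\<in>?S. p \<beta> * (\<Sum>\<gamma>\<in>?B. ?C \<beta> \<gamma> * ?M \<gamma>))"
    unfolding poly_eval_def by (intro sum.cong refl) (simp add: mon)
  also have "\<dots> = (\<Sum>\<beta>\<in>?S. \<Sum>\<gamma>\<in>?B. p \<beta> * ?C \<beta> \<gamma> * ?M \<gamma>)"
    by (simp add: sum_distrib_left mult.assoc)
  also have "\<dots> = (\<Sum>\<gamma>\<in>?B. \<Sum>\<beta>\<in>?S. p \<beta> * ?C \<beta> \<gamma> * ?M \<gamma>)"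
    by (rule sum.swap)
  also have "\<dots> = (\<Sum>\<gamma>\<in>?B. ecoef p a \<gamma> * ?M \<gamma>)"
    by (simp add: ecoef_def sum_distrib_right)
  finally show ?thesis .
qed

lemma V_inv:
  fixes a \<xi> \<eta> :: "real^'n"
  assumes lt: "\<xi> $ k < \<eta> $ k" and N1: "1 \<le> N k" and ij: "i \<in> {1..N k}" "j \<in> {1..N k}"
  shows "(\<Sum>l=1..N k. inv_matN (N k) (V_mat a \<xi> \<eta> N k) i l * V_mat a \<xi> \<eta> N k l j) = (if i = j then 1 else 0)"
proof -
  let ?V = "V_mat a \<xi> \<eta> N k"
  let ?m = "N k"
  have D: "Delta \<xi> \<eta> N k > 0" using lt N1 by (simp add: Delta_def)
  define t where "t i = \<xi> $ k + real i * Delta \<xi> \<eta> N k - a $ k" for i :: nat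
  have Vt: "?V i j = t i ^ j - t (i - 1) ^ j" if "i \<in> {1..?m}" "j \<in> {1..?m}" for i j
    using that by (simp add: V_mat_def t_def of_nat_diff)
  have inj: "inj_on t {0..?m}"
  proof (rule inj_onI)
    fix i j assume "i \<in> {0..?m}" "j \<in> {0..?m}" "t i = t j"
    then have "real i * Delta \<xi> \<eta> N k = real j * Delta \<xi> \<eta> N k" by (simp add: t_def)
    then show "i = j" using D by simp
  qed
  have injV: "\<forall>j\<in>{1..?m}. c j = 0" if h: "\<forall>i\<in>{1..?m}. (\<Sum>j=1..?m. ?V i j * c j) = 0" for c
  proof (rule vand_inj[OF inj])
    show "\<forall>i\<in>{1..?m}. (\<Sum>j=1..?m. (t i ^ j - t (i - 1) ^ j) * c j) = 0"
    proof
      fix i assume i: "i \<in> {1..?m}"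
      have "(\<Sum>j=1..?m. (t i ^ j - t (i - 1) ^ j) * c j) = (\<Sum>j=1..?m. ?V i j * c j)"
        using i by (intro sum.cong refl) (simp add: Vt)
      then show "(\<Sum>j=1..?m. (t i ^ j - t (i - 1) ^ j) * c j) = 0" using h i by simp
    qed
  qed
  show ?thesis using inv_matN_ok[of ?m ?V] injV ij by blast
qed

lemma int_mono:
  fixes a \<xi> \<eta> :: "real^'n"
  assumes lt: "\<forall>k. \<xi> $ k < \<eta> $ k" and \<alpha>: "\<forall>k. 1 \<le> \<alpha> k \<and> \<alpha> k \<le> N k"
  shows "integral (R_alpha \<xi> \<eta> N \<alpha>) (\<lambda>x. \<Prod>k\<in>UNIV. (x $ k - a $ k) ^ \<gamma> k) =
    (\<Prod>k\<in>UNIV. ((\<xi> $ k + real (\<alpha> k) * Delta \<xi> \<eta> N k - a $ k) ^ Suc (\<gamma> k)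
                - (\<xi> $ k + (real (\<alpha> k) - 1) * Delta \<xi> \<eta> N k - a $ k) ^ Suc (\<gamma> k)) / real (Suc (\<gamma> k)))"
proof -
  have D: "Delta \<xi> \<eta> N k > 0" for k
  proof -
    have "1 \<le> N k" using \<alpha> le_trans by blast
    then show ?thesis using lt by (simp add: Delta_def)
  qed
  have "integral (R_alpha \<xi> \<eta> N \<alpha>) (\<lambda>x. \<Prod>k\<in>UNIV. (x $ k - a $ k) ^ \<gamma> k) =
    (\<Prod>k\<in>UNIV. integral {\<xi> $ k + (real (\<alpha> k) - 1) * Delta \<xi> \<eta> N k..\<xi> $ k + real (\<alpha> k) * Delta \<xi> \<eta> N k} (\<lambda>t. (t - a $ k) ^ \<gamma> k))"
    unfolding R_alpha_def
    by (subst integral_cbox_prod_cart[where h = "\<lambda>k t. (t - a $ k) ^ \<gamma> k"]) (auto intro!: continuous_intros)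
  also have "\<dots> = (\<Prod>k\<in>UNIV. ((\<xi> $ k + real (\<alpha> k) * Delta \<xi> \<eta> N k - a $ k) ^ Suc (\<gamma> k)
                - (\<xi> $ k + (real (\<alpha> k) - 1) * Delta \<xi> \<eta> N k - a $ k) ^ Suc (\<gamma> k)) / real (Suc (\<gamma> k)))"
  proof (intro prod.cong refl)
    fix k
    have "\<xi> $ k + (real (\<alpha> k) - 1) * Delta \<xi> \<eta> N k \<le> \<xi> $ k + real (\<alpha> k) * Delta \<xi> \<eta> N k"
      using D[of k] by (simp add: algebra_simps)
    then show "integral {\<xi> $ k + (real (\<alpha> k) - 1) * Delta \<xi> \<eta> N k..\<xi> $ k + real (\<alpha> k) * Delta \<xi> \<eta> N k} (\<lambda>t. (t - a $ k) ^ \<gamma> k) =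
      ((\<xi> $ k + real (\<alpha> k) * Delta \<xi> \<eta> N k - a $ k) ^ Suc (\<gamma> k)
                - (\<xi> $ k + (real (\<alpha> k) - 1) * Delta \<xi> \<eta> N k - a $ k) ^ Suc (\<gamma> k)) / real (Suc (\<gamma> k))"
      by (rule integral_poly_1d)
  qed
  finally show ?thesis .
qed

lemma d_alpha_eq:
  fixes f :: "real^'n \<Rightarrow> real \<Rightarrow> real" and g :: "real^'n \<Rightarrow> real"
  assumes lt: "\<forall>k. \<xi> $ k < \<eta> $ k" and \<alpha>: "\<forall>k. 1 \<le> \<alpha> k \<and> \<alpha> k \<le> N k"
    and rs: "r < s" and cg: "continuous_on UNIV g"
    and key: "\<And>x. x \<in> cbox \<xi> \<eta> \<Longrightarrow> r \<le> g x \<and> g x \<le> s \<and> (\<forall>y\<in>{r..s}. Theta_y f x y =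
        (if pos then (if g x \<le> y then 1 else 0) else (if y \<le> g x then 1 else 0)))"
    and nu: "\<nu> = (if pos then 1 else -1)"
  shows "d_alpha f \<nu> {r..s} \<xi> \<eta> N \<alpha> = integral (R_alpha \<xi> \<eta> N \<alpha>) g"
proof -
  have D: "Delta \<xi> \<eta> N k > 0" for k
  proof -
    have "1 \<le> N k" using \<alpha> le_trans by blast
    then show ?thesis using lt by (simp add: Delta_def)
  qed
  define lo :: "real^'n" where "lo = (\<chi> k. \<xi> $ k + (real (\<alpha> k) - 1) * Delta \<xi> \<eta> N k)"
  define hi :: "real^'n" where "hi = (\<chi> k. \<xi> $ k + real (\<alpha> k) * Delta \<xi> \<eta> N k)"
  have R: "R_alpha \<xi> \<eta> N \<alpha> = cbox lo hi" by (simp add: R_alpha_def lo_def hi_def)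
  have lohi: "lo $ k \<le> hi $ k" for k using D[of k] by (simp add: lo_def hi_def algebra_simps)
  have sub: "cbox lo hi \<subseteq> cbox \<xi> \<eta>"
  proof
    fix x assume "x \<in> cbox lo hi"
    then have x: "lo $ k \<le> x $ k \<and> x $ k \<le> hi $ k" for k by (simp add: mem_box_cart)
    have "\<xi> $ k \<le> x $ k \<and> x $ k \<le> \<eta> $ k" for k
    proof -
      have a1: "1 \<le> real (\<alpha> k)" "real (\<alpha> k) \<le> real (N k)" using \<alpha> by auto
      have "\<xi> $ k \<le> lo $ k" using D[of k] a1 by (simp add: lo_def)
      moreover have "hi $ k \<le> \<eta> $ k"
      proof -
        have "real (\<alpha> k) * Delta \<xi> \<eta> N k \<le> real (N k) * Delta \<xi> \<eta> N k"
          using D[of k] a1 by (intro mult_right_mono) auto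
        also have "\<dots> = \<eta> $ k - \<xi> $ k" using a1 by (simp add: Delta_def)
        finally show ?thesis by (simp add: hi_def)
      qed
      ultimately show ?thesis using x[of k] by auto
    qed
    then show "x \<in> cbox \<xi> \<eta>" by (simp add: mem_box_cart)
  qed
  have cont: "measure lborel (cbox lo hi) = (\<Prod>k\<in>UNIV. Delta \<xi> \<eta> N k)"
  proof -
    have "cbox lo hi \<noteq> {}" using lohi by (auto simp: interval_ne_empty_cart)
    then have "measure lborel (cbox lo hi) = (\<Prod>k\<in>UNIV. hi $ k - lo $ k)" by (rule content_cbox_cart)
    also have "\<dots> = (\<Prod>k\<in>UNIV. Delta \<xi> \<eta> N k)" by (simp add: lo_def hi_def algebra_simps)
    finally show ?thesis .
  qed
  have SI: "Sup {r..s} = s" "Inf {r..s} = r" using rs by auto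
  let ?F = "\<lambda>z. Theta_y f (fst z) (snd z)"
  have rng: "\<And>x. x \<in> cbox lo hi \<Longrightarrow> r \<le> g x \<and> g x \<le> s" using key sub by blast
  show ?thesis
  proof (cases pos)
    case True
    have "integral (cbox lo hi \<times> {r..s}) ?F = measure lborel (cbox lo hi) * s - integral (cbox lo hi) g"
    proof (rule theta_integral_up[OF cg rng])
      fix x y assume "x \<in> cbox lo hi" "y \<in> {r..s}"
      then show "?F (x, y) = (if g x \<le> y then 1 else 0)" using key[of x] sub True by auto
    qed
    then show ?thesis using True unfolding d_alpha_def nu R SI cont by simp
  next
    case False
    have "integral (cbox lo hi \<times> {r..s}) ?F = integral (cbox lo hi) g - measure lborel (cbox lo hi) * r"
    proof (rule theta_integral_down[OF cg rng])
      fix x y assume "x \<in> cbox lo hi" "y \<in> {r..s}"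
      then show "?F (x, y) = (if y \<le> g x then 1 else 0)" using key[of x] sub False by auto
    qed
    then show ?thesis using False unfolding d_alpha_def nu R SI cont by simp
  qed
qed

lemma cont_poly_eval: "continuous_on UNIV (poly_eval p)"
  unfolding poly_eval_def by (intro continuous_intros)

lemma coef_eq:
  fixes f :: "real^'n \<Rightarrow> real \<Rightarrow> real" and p :: "('n \<Rightarrow> nat) \<Rightarrow> real"
  assumes lt: "\<forall>k. \<xi> $ k < \<eta> $ k" and rs: "r < s"
    and fin: "finite {\<beta>. p \<beta> \<noteq> 0}"
    and key: "\<And>x. x \<in> cbox \<xi> \<eta> \<Longrightarrow> r \<le> poly_eval p x \<and> poly_eval p x \<le> s \<and> (\<forall>y\<in>{r..s}. Theta_y f x y =
        (if pos then (if poly_eval p x \<le> y then 1 else 0) else (if y \<le> poly_eval p x then 1 else 0)))"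
    and nu: "\<nu> = (if pos then 1 else -1)"
    and deg: "\<forall>k. deg_in p k < N k"
    and \<beta>: "\<beta> \<in> {\<beta>. \<forall>k. \<beta> k \<le> N k - 1}"
  shows "c_beta f \<nu> {r..s} a \<xi> \<eta> N \<beta> = ecoef p a \<beta>"
proof -
  let ?A = "{\<alpha>. \<forall>k. 1 \<le> \<alpha> k \<and> \<alpha> k \<le> N k}"
  let ?B = "{\<gamma>. \<forall>k. \<gamma> k \<le> N k - 1}"
  let ?V = "\<lambda>k. V_mat a \<xi> \<eta> N k"
  let ?W = "\<lambda>k. inv_matN (N k) (V_mat a \<xi> \<eta> N k)"
  let ?M = "\<lambda>\<gamma> x. \<Prod>k\<in>UNIV. (x $ k - a $ k) ^ \<gamma> k"
  have N1: "1 \<le> N k" for k using deg[rule_format, of k] by simp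
  have finA: "finite ?A" using finite_idx[of "\<lambda>k. {1..N k}"] by simp
  have finB: "finite ?B" by (rule finite_idx_le)
  have dA: "d_alpha f \<nu> {r..s} \<xi> \<eta> N \<alpha> = (\<Sum>\<gamma>\<in>?B. ecoef p a \<gamma> * (\<Prod>k\<in>UNIV. ?V k (\<alpha> k) (\<gamma> k + 1) / real (\<gamma> k + 1)))"
    if \<alpha>: "\<alpha> \<in> ?A" for \<alpha>
  proof -
    have \<alpha>': "\<forall>k. 1 \<le> \<alpha> k \<and> \<alpha> k \<le> N k" using \<alpha> by simp
    have "d_alpha f \<nu> {r..s} \<xi> \<eta> N \<alpha> = integral (R_alpha \<xi> \<eta> N \<alpha>) (poly_eval p)"
      by (rule d_alpha_eq[OF lt \<alpha>' rs cont_poly_eval key nu])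
    also have "\<dots> = integral (R_alpha \<xi> \<eta> N \<alpha>) (\<lambda>x. \<Sum>\<gamma>\<in>?B. ecoef p a \<gamma> * ?M \<gamma> x)"
      using poly_expand[OF fin deg] by simp
    also have "\<dots> = (\<Sum>\<gamma>\<in>?B. integral (R_alpha \<xi> \<eta> N \<alpha>) (\<lambda>x. ecoef p a \<gamma> * ?M \<gamma> x))"
    proof (rule integral_sum[OF finB])
      fix \<gamma> show "(\<lambda>x. ecoef p a \<gamma> * ?M \<gamma> x) integrable_on R_alpha \<xi> \<eta> N \<alpha>"
        unfolding R_alpha_def by (intro integrable_continuous continuous_intros)
    qed
    also have "\<dots> = (\<Sum>\<gamma>\<in>?B. ecoef p a \<gamma> * integral (R_alpha \<xi> \<eta> N \<alpha>) (?M \<gamma>))"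
      by (simp add: integral_mult_right)
    also have "\<dots> = (\<Sum>\<gamma>\<in>?B. ecoef p a \<gamma> * (\<Prod>k\<in>UNIV. ?V k (\<alpha> k) (\<gamma> k + 1) / real (\<gamma> k + 1)))"
    proof (intro sum.cong refl)
      fix \<gamma> assume \<gamma>: "\<gamma> \<in> ?B"
      have "integral (R_alpha \<xi> \<eta> N \<alpha>) (?M \<gamma>) = (\<Prod>k\<in>UNIV. ((\<xi> $ k + real (\<alpha> k) * Delta \<xi> \<eta> N k - a $ k) ^ Suc (\<gamma> k)
                - (\<xi> $ k + (real (\<alpha> k) - 1) * Delta \<xi> \<eta> N k - a $ k) ^ Suc (\<gamma> k)) / real (Suc (\<gamma> k)))"
        by (rule int_mono[OF lt \<alpha>'])
      also have "\<dots> = (\<Prod>k\<in>UNIV. ?V k (\<alpha> k) (\<gamma> k + 1) / real (\<gamma> k + 1))"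
      proof (intro prod.cong refl)
        fix k
        have gk: "\<gamma> k \<le> N k - 1" using \<gamma> by simp
        have "\<alpha> k \<in> {1..N k}" "\<gamma> k + 1 \<in> {1..N k}" using \<alpha>' gk N1[of k] by auto
        then show "((\<xi> $ k + real (\<alpha> k) * Delta \<xi> \<eta> N k - a $ k) ^ Suc (\<gamma> k)
                - (\<xi> $ k + (real (\<alpha> k) - 1) * Delta \<xi> \<eta> N k - a $ k) ^ Suc (\<gamma> k)) / real (Suc (\<gamma> k))
              = ?V k (\<alpha> k) (\<gamma> k + 1) / real (\<gamma> k + 1)"
          by (simp add: V_mat_def)
      qed
      finally show "ecoef p a \<gamma> * integral (R_alpha \<xi> \<eta> N \<alpha>) (?M \<gamma>) = ecoef p a \<gamma> * (\<Prod>k\<in>UNIV. ?V k (\<alpha> k) (\<gamma> k + 1) / real (\<gamma> k + 1))"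
        by simp
    qed
    finally show ?thesis .
  qed
  have inner: "(\<Sum>\<alpha>\<in>?A. \<Prod>k\<in>UNIV. ?W k (\<beta> k + 1) (\<alpha> k) * (?V k (\<alpha> k) (\<gamma> k + 1) / real (\<gamma> k + 1)))
      = (if \<beta> = \<gamma> then (\<Prod>k\<in>UNIV. 1 / real (\<beta> k + 1)) else 0)" if \<gamma>: "\<gamma> \<in> ?B" for \<gamma>
  proof -
    have "(\<Sum>\<alpha>\<in>?A. \<Prod>k\<in>UNIV. ?W k (\<beta> k + 1) (\<alpha> k) * (?V k (\<alpha> k) (\<gamma> k + 1) / real (\<gamma> k + 1)))
        = (\<Prod>k\<in>UNIV. \<Sum>i\<in>{1..N k}. ?W k (\<beta> k + 1) i * (?V k i (\<gamma> k + 1) / real (\<gamma> k + 1)))"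
      by (subst prod_sum_fun) auto
    also have "\<dots> = (\<Prod>k\<in>UNIV. (if \<beta> k = \<gamma> k then 1 else 0) / real (\<gamma> k + 1))"
    proof (intro prod.cong refl)
      fix k
      have bk: "\<beta> k \<le> N k - 1" "\<gamma> k \<le> N k - 1" using \<beta> \<gamma> by auto
      have r: "\<beta> k + 1 \<in> {1..N k}" "\<gamma> k + 1 \<in> {1..N k}" using bk N1[of k] by auto
      have "(\<Sum>i\<in>{1..N k}. ?W k (\<beta> k + 1) i * (?V k i (\<gamma> k + 1) / real (\<gamma> k + 1)))
          = (\<Sum>i=1..N k. ?W k (\<beta> k + 1) i * ?V k i (\<gamma> k + 1)) / real (\<gamma> k + 1)"
        by (simp add: sum_divide_distrib)
      also have "\<dots> = (if \<beta> k + 1 = \<gamma> k + 1 then 1 else 0) / real (\<gamma> k + 1)"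
        using V_inv[of \<xi> k \<eta> N "\<beta> k + 1" "\<gamma> k + 1" a] lt N1[of k] r by simp
      finally show "(\<Sum>i\<in>{1..N k}. ?W k (\<beta> k + 1) i * (?V k i (\<gamma> k + 1) / real (\<gamma> k + 1)))
          = (if \<beta> k = \<gamma> k then 1 else 0) / real (\<gamma> k + 1)" by simp
    qed
    also have "\<dots> = (if \<beta> = \<gamma> then (\<Prod>k\<in>UNIV. 1 / real (\<beta> k + 1)) else 0)"
    proof (cases "\<beta> = \<gamma>")
      case True
      then show ?thesis by simp
    next
      case False
      then obtain k where "\<beta> k \<noteq> \<gamma> k" by auto
      then have "(\<Prod>k\<in>UNIV. (if \<beta> k = \<gamma> k then 1 else 0) / real (\<gamma> k + 1)) = 0"
        by (intro prod_zero) auto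
      then show ?thesis using False by simp
    qed
    finally show ?thesis .
  qed
  have "c_beta f \<nu> {r..s} a \<xi> \<eta> N \<beta> = (\<Prod>k\<in>UNIV. real (\<beta> k + 1)) *
      (\<Sum>\<alpha>\<in>?A. (\<Prod>k\<in>UNIV. ?W k (\<beta> k + 1) (\<alpha> k)) *
        (\<Sum>\<gamma>\<in>?B. ecoef p a \<gamma> * (\<Prod>k\<in>UNIV. ?V k (\<alpha> k) (\<gamma> k + 1) / real (\<gamma> k + 1))))"
    unfolding c_beta_def by (intro arg_cong2[where f = "(*)"] refl sum.cong) (simp_all add: dA)
  also have "\<dots> = (\<Prod>k\<in>UNIV. real (\<beta> k + 1)) *
      (\<Sum>\<gamma>\<in>?B. ecoef p a \<gamma> * (\<Sum>\<alpha>\<in>?A. \<Prod>k\<in>UNIV. ?W k (\<beta> k + 1) (\<alpha> k) * (?V k (\<alpha> k) (\<gamma> k + 1) / real (\<gamma> k + 1))))"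
  proof -
    have "(\<Sum>\<alpha>\<in>?A. (\<Prod>k\<in>UNIV. ?W k (\<beta> k + 1) (\<alpha> k)) *
        (\<Sum>\<gamma>\<in>?B. ecoef p a \<gamma> * (\<Prod>k\<in>UNIV. ?V k (\<alpha> k) (\<gamma> k + 1) / real (\<gamma> k + 1))))
      = (\<Sum>\<alpha>\<in>?A. \<Sum>\<gamma>\<in>?B. ecoef p a \<gamma> * (\<Prod>k\<in>UNIV. ?W k (\<beta> k + 1) (\<alpha> k) * (?V k (\<alpha> k) (\<gamma> k + 1) / real (\<gamma> k + 1))))"
      unfolding sum_distrib_left by (intro sum.cong refl) (simp only: prod.distrib mult.left_commute)
    also have "\<dots> = (\<Sum>\<gamma>\<in>?B. \<Sum>\<alpha>\<in>?A. ecoef p a \<gamma> * (\<Prod>k\<in>UNIV. ?W k (\<beta> k + 1) (\<alpha> k) * (?V k (\<alpha> k) (\<gamma> k + 1) / real (\<gamma> k + 1))))"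
      by (rule sum.swap)
    also have "\<dots> = (\<Sum>\<gamma>\<in>?B. ecoef p a \<gamma> * (\<Sum>\<alpha>\<in>?A. \<Prod>k\<in>UNIV. ?W k (\<beta> k + 1) (\<alpha> k) * (?V k (\<alpha> k) (\<gamma> k + 1) / real (\<gamma> k + 1))))"
      by (simp add: sum_distrib_left)
    finally show ?thesis by simp
  qed
  also have "\<dots> = (\<Prod>k\<in>UNIV. real (\<beta> k + 1)) *
      (\<Sum>\<gamma>\<in>?B. ecoef p a \<gamma> * (if \<beta> = \<gamma> then (\<Prod>k\<in>UNIV. 1 / real (\<beta> k + 1)) else 0))"
  proof (rule arg_cong2[where f = "(*)"], rule refl, rule sum.cong, rule refl)
    fix \<gamma> assume g: "\<gamma> \<in> ?B"
    show "ecoef p a \<gamma> * (\<Sum>\<alpha>\<in>?A. \<Prod>k\<in>UNIV. ?W k (\<beta> k + 1) (\<alpha> k) * (?V k (\<alpha> k) (\<gamma> k + 1) / real (\<gamma> k + 1)))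
        = ecoef p a \<gamma> * (if \<beta> = \<gamma> then (\<Prod>k\<in>UNIV. 1 / real (\<beta> k + 1)) else 0)"
      by (simp only: inner[OF g])
  qed
  also have "\<dots> = (\<Prod>k\<in>UNIV. real (\<beta> k + 1)) * (ecoef p a \<beta> * (\<Prod>k\<in>UNIV. 1 / real (\<beta> k + 1)))"
  proof -
    have "(\<Sum>\<gamma>\<in>?B. ecoef p a \<gamma> * (if \<beta> = \<gamma> then (\<Prod>k\<in>UNIV. 1 / real (\<beta> k + 1)) else 0))
        = (\<Sum>\<gamma>\<in>?B. if \<beta> = \<gamma> then ecoef p a \<gamma> * (\<Prod>k\<in>UNIV. 1 / real (\<beta> k + 1)) else 0)"
      by (intro sum.cong refl) auto
    also have "\<dots> = ecoef p a \<beta> * (\<Prod>k\<in>UNIV. 1 / real (\<beta> k + 1))"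
      using \<beta> finB by (simp add: sum.delta)
    finally show ?thesis by simp
  qed
  also have "\<dots> = ecoef p a \<beta>"
  proof -
    have "(\<Prod>k\<in>UNIV. real (\<beta> k + 1)) * (\<Prod>k\<in>UNIV. 1 / real (\<beta> k + 1))
        = (\<Prod>k\<in>UNIV. real (\<beta> k + 1) * (1 / real (\<beta> k + 1)))"
      by (rule prod.distrib[symmetric])
    also have "\<dots> = 1" by simp
    finally have one: "(\<Prod>k\<in>UNIV. real (\<beta> k + 1)) * (\<Prod>k\<in>UNIV. 1 / real (\<beta> k + 1)) = 1" .
    show ?thesis by (metis one mult.left_commute mult.right_neutral)
  qed
  finally show ?thesis .
qed

theorem corollary3p3:
  fixes f :: "real^'n \<Rightarrow> real \<Rightarrow> real"
    and f' :: "((real^'n) \<times> real) \<Rightarrow> ((real^'n) \<times> real) \<Rightarrow>\<^sub>L real"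
    and a :: "real^'n" and b :: real
    and p :: "('n \<Rightarrow> nat) \<Rightarrow> real"
  assumes deriv: "\<And>z. ((\<lambda>z. f (fst z) (snd z)) has_derivative blinfun_apply (f' z)) (at z)"
    and cont_deriv: "continuous_on UNIV f'"
    and zero: "f a b = 0"
    and dy: "blinfun_apply (f' (a, b)) (0, 1) \<noteq> 0"
    and fin: "finite {\<beta>. p \<beta> \<noteq> 0}"
    and g_at: "poly_eval p a = b"
    and g_impl: "\<exists>U. open U \<and> a \<in> U \<and> (\<forall>x\<in>U. f x (poly_eval p x) = 0)"
  shows "\<exists>\<xi> \<eta> :: real^'n. \<exists>r s :: real.
           (\<forall>k. \<xi> $ k < \<eta> $ k) \<and> a \<in> cbox \<xi> \<eta> \<and> r < s \<and> b \<in> {r..s} \<and>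
           assumption1 f (cbox \<xi> \<eta>) {r..s} \<and>
           (\<forall>x\<in>cbox \<xi> \<eta>. n_y f {r..s} x = n_y f {r..s} a) \<and>
           (\<forall>N :: 'n \<Rightarrow> nat. (\<forall>k. deg_in p k < N k) \<longrightarrow>
              (\<forall>x. poly_eval p x =
                 (\<Sum>\<beta>\<in>{\<beta>. \<forall>k. \<beta> k \<le> N k - 1}.
                    c_beta f (n_y f {r..s} a) {r..s} a \<xi> \<eta> N \<beta> *
                    (\<Prod>k\<in>UNIV. (x $ k - a $ k) ^ \<beta> k))))"
proof -
  obtain \<xi> \<eta> :: "real^'n" and r s :: real and pos where
    lt: "\<forall>k. \<xi> $ k < \<eta> $ k" and aR: "a \<in> cbox \<xi> \<eta>" and rs: "r < s" "b \<in> {r..s}" and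
    K: "\<forall>x\<in>cbox \<xi> \<eta>. r < poly_eval p x \<and> poly_eval p x < s \<and>
              (\<forall>y\<in>{r..s}. (0 \<le> f x y) \<longleftrightarrow> (if pos then poly_eval p x \<le> y else y \<le> poly_eval p x))"
    using local_box_lemma[OF deriv cont_deriv dy cont_poly_eval g_at g_impl] by blast
  have SF: "one_jump_on (sign_y f x) {r..s} \<and> n_y f {r..s} x = (if pos then 1 else -1) \<and>
      (\<forall>y\<in>{r..s}. Theta_y f x y = (if pos then (if poly_eval p x \<le> y then 1 else 0) else (if y \<le> poly_eval p x then 1 else 0)))"
    if x: "x \<in> cbox \<xi> \<eta>" for x
  proof -
    have k: "r < poly_eval p x" "poly_eval p x < s"
      "\<And>y. y \<in> {r..s} \<Longrightarrow> (0 \<le> f x y) \<longleftrightarrow> (if pos then poly_eval p x \<le> y else y \<le> poly_eval p x)"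
      using K x by auto
    show ?thesis using sign_facts[OF k(1,2), of f x pos] k(3) by blast
  qed
  define \<nu> where "\<nu> = n_y f {r..s} a"
  have nu: "\<nu> = (if pos then 1 else -1)" using SF[OF aR] by (simp add: \<nu>_def)
  have key: "r \<le> poly_eval p x \<and> poly_eval p x \<le> s \<and> (\<forall>y\<in>{r..s}. Theta_y f x y =
        (if pos then (if poly_eval p x \<le> y then 1 else 0) else (if y \<le> poly_eval p x then 1 else 0)))"
    if "x \<in> cbox \<xi> \<eta>" for x
    using K SF that by (meson less_imp_le)
  have A1: "assumption1 f (cbox \<xi> \<eta>) {r..s}" unfolding assumption1_def using SF by blast
  have NY: "\<forall>x\<in>cbox \<xi> \<eta>. n_y f {r..s} x = n_y f {r..s} a" using SF aR by simp
  have EXP: "\<forall>N :: 'n \<Rightarrow> nat. (\<forall>k. deg_in p k < N k) \<longrightarrow>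
              (\<forall>x. poly_eval p x =
                 (\<Sum>\<beta>\<in>{\<beta>. \<forall>k. \<beta> k \<le> N k - 1}.
                    c_beta f (n_y f {r..s} a) {r..s} a \<xi> \<eta> N \<beta> *
                    (\<Prod>k\<in>UNIV. (x $ k - a $ k) ^ \<beta> k)))"
  proof (intro allI impI)
    fix N :: "'n \<Rightarrow> nat" and x :: "real^'n"
    assume deg: "\<forall>k. deg_in p k < N k"
    have "poly_eval p x = (\<Sum>\<gamma>\<in>{\<gamma>. \<forall>k. \<gamma> k \<le> N k - 1}. ecoef p a \<gamma> * (\<Prod>k\<in>UNIV. (x $ k - a $ k) ^ \<gamma> k))"
      by (rule poly_expand[OF fin deg])
    also have "\<dots> = (\<Sum>\<beta>\<in>{\<beta>. \<forall>k. \<beta> k \<le> N k - 1}. c_beta f \<nu> {r..s} a \<xi> \<eta> N \<beta> * (\<Prod>k\<in>UNIV. (x $ k - a $ k) ^ \<beta> k))"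
      by (intro sum.cong refl) (simp add: coef_eq[OF lt rs(1) fin key nu deg])
    finally show "poly_eval p x = (\<Sum>\<beta>\<in>{\<beta>. \<forall>k. \<beta> k \<le> N k - 1}.
                    c_beta f (n_y f {r..s} a) {r..s} a \<xi> \<eta> N \<beta> * (\<Prod>k\<in>UNIV. (x $ k - a $ k) ^ \<beta> k))"
      by (simp add: \<nu>_def)
  qed
  show ?thesis using lt aR rs A1 NY EXP by blast
qed

end
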